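(* Let $n$ be odd and squarefree, and let $A=S(n)$. Let $S=(x_1,\ldots,x_l)$ be a sequence in $\mathbb{Z}_n$ such that for every prime divisor $p$ of $n$, at least two terms of $S$ are coprime to $p$. Suppose at most one term of $S$ is a unit. Then $S$ is an $A$-weighted zero-sum sequence.
   Context: $\mathbb{Z}_n$ is the integers mod $n$, $U(n)$ its unit group. For $A\subseteq\mathbb{Z}_n$, a sequence $(x_1,\ldots,x_l)$ is an $A$-weighted zero-sum sequence if there exist $a_1,\ldots,a_l\in A$ with $\sum a_ix_i=0$. For odd $n=\prod p_i^{r_i}$ and $a\in U(n)$, $\left(\frac{a}{n}\right)=\prod\left(\frac{a}{p_i}\right)^{r_i}$ (Legendre symbols of the images of $a$ mod $p_i$), and $S(n)$ is the kernel of $a\mapsto\left(\frac{a}{n}\right)$ on $U(n)$. *)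

theory Defs
  imports "HOL-Number_Theory.Number_Theory" "HOL-Computational_Algebra.Squarefree"
begin

text \<open>Elements of Z_n are represented by integers in {0..<n}.
  The generalized symbol (a/n) = prod over primes p | n of (a/p)^(v_p(n)).\<close>

definition jacobi_sym :: "int \<Rightarrow> nat \<Rightarrow> int" where
  "jacobi_sym a n = (\<Prod>p\<in>prime_factors n. Legendre a (int p) ^ multiplicity p n)"

definition S_set :: "nat \<Rightarrow> int set" where
  "S_set n = {a \<in> {0..<int n}. coprime a (int n) \<and> jacobi_sym a n = 1}"

definition weighted_zero_sum :: "nat \<Rightarrow> int set \<Rightarrow> int list \<Rightarrow> bool" where
  "weighted_zero_sum n A xs \<longleftrightarrow>
     (\<exists>as. length as = length xs \<and> set as \<subseteq> A \<and>
        [(\<Sum>i<length xs. as ! i * xs ! i) = 0] (mod int n))"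

end

theory Submission
  imports Defs
begin


lemma Legendre_cong:
  assumes "[a = b] (mod p)" shows "Legendre a p = Legendre b p"
proof -
  have "[a = 0] (mod p) \<longleftrightarrow> [b = 0] (mod p)"
    using assms cong_sym cong_trans by blast
  moreover have "QuadRes p a \<longleftrightarrow> QuadRes p b"
    unfolding QuadRes_def using assms cong_sym cong_trans by blast
  ultimately show ?thesis unfolding Legendre_def by simp
qed

lemma Legendre_pm1:
  assumes "\<not> p dvd a" shows "Legendre a p = 1 \<or> Legendre a p = -1"
  using assms by (auto simp: Legendre_def cong_0_iff)

lemma Legendre_one:
  assumes "prime (p::int)" shows "Legendre 1 p = 1"
proof -
  have "\<not> [1 = 0] (mod p)" using assms by (metis cong_0_iff not_prime_unit)
  moreover have "QuadRes p 1" unfolding QuadRes_def by (rule exI[of _ 1]) simp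
  ultimately show ?thesis unfolding Legendre_def by simp
qed

lemma jacobi_cong:
  assumes "[a = b] (mod int n)" shows "jacobi_sym a n = jacobi_sym b n"
  unfolding jacobi_sym_def
proof (rule prod.cong[OF refl])
  fix p assume "p \<in> prime_factors n"
  hence "int p dvd int n" by auto
  hence "[a = b] (mod int p)" using assms cong_dvd_modulus by blast
  thus "Legendre a (int p) ^ multiplicity p n = Legendre b (int p) ^ multiplicity p n"
    using Legendre_cong by metis
qed

lemma jacobi_one: "jacobi_sym 1 n = 1"
  unfolding jacobi_sym_def
proof (rule prod.neutral, rule ballI)
  fix p assume "p \<in> prime_factors n"
  hence "prime (int p)" by auto
  thus "Legendre 1 (int p) ^ multiplicity p n = 1" using Legendre_one by simp
qed

lemma jacobi_pm1:
  assumes "coprime a (int n)" shows "jacobi_sym a n = 1 \<or> jacobi_sym a n = -1"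
proof -
  have "\<bar>Legendre a (int p) ^ multiplicity p n\<bar> = 1" if "p \<in> prime_factors n" for p
  proof -
    have "int p dvd int n" using that by auto
    hence "\<not> int p dvd a" using assms that
      by (metis coprime_common_divisor in_prime_factors_iff not_prime_unit of_nat_dvd_iff of_nat_1)
    thus ?thesis using Legendre_pm1 by (metis abs_minus_cancel abs_one power_abs power_one)
  qed
  hence "\<bar>jacobi_sym a n\<bar> = 1" unfolding jacobi_sym_def abs_prod by simp
  thus ?thesis by linarith
qed

lemma jacobi_mult_prime:
  assumes "prime p" "\<not> p dvd m" "m > 0"
  shows "jacobi_sym a (p * m) = Legendre a (int p) * jacobi_sym a m"
proof -
  have pf: "prime_factors (p * m) = insert p (prime_factors m)"
    using assms by (simp add: prime_factors_product prime_prime_factors)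
  have pn: "p \<notin> prime_factors m" using assms by auto
  have mp: "multiplicity p (p * m) = 1"
  proof -
    have "multiplicity p (p*m) = Suc (multiplicity p m)"
      by (rule multiplicity_times_same) (use assms in auto)
    thus ?thesis using not_dvd_imp_multiplicity_0[OF assms(2)] by simp
  qed
  have mq: "multiplicity q (p * m) = multiplicity q m" if "q \<in> prime_factors m" for q
  proof -
    have "prime q" "q \<noteq> p" using that pn by auto
    thus ?thesis using assms
      by (simp add: prime_elem_multiplicity_mult_distrib prime_multiplicity_other)
  qed
  show ?thesis unfolding jacobi_sym_def pf
    using pn mp mq by (simp add: prod.insert cong: prod.cong)
qed

lemma exists_nonres:
  assumes "prime (p::int)" "p > 2"
  shows "\<exists>g. \<not> p dvd g \<and> Legendre g p = -1"
proof -
  let ?h = "\<lambda>x. x^2 mod p"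
  obtain k where k: "p = 2*k+1" using prime_odd_int[OF assms] by (auto elim!: oddE)
  have H: "(p - 1) div 2 = k" using k by simp
  have sub: "{a \<in> {1..p-1}. QuadRes p a} \<subseteq> ?h ` {1..k}"
  proof
    fix a assume a: "a \<in> {a \<in> {1..p-1}. QuadRes p a}"
    then obtain y where y: "[y^2 = a] (mod p)" unfolding QuadRes_def by auto
    define r where "r = y mod p"
    have r: "[r^2 = a] (mod p)" using y unfolding r_def
      by (metis cong_def power_mod)
    have amod: "a mod p = a" using a by auto
    have ra: "r^2 mod p = a" using r amod by (simp add: cong_def)
    have "r \<noteq> 0" proof
      assume "r = 0" hence "a mod p = 0" using r by (simp add: cong_def)
      thus False using amod a by auto
    qed
    moreover have "0 \<le> r" "r < p" using assms unfolding r_def by auto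
    ultimately have disj: "r \<in> {1..k} \<or> p - r \<in> {1..k}" unfolding atLeastAtMost_iff using k by linarith
    have pr: "(p - r)^2 mod p = r^2 mod p"
    proof -
      have "(p - r)^2 = r^2 + p * (p - 2*r)" by (simp add: power2_eq_square algebra_simps)
      thus ?thesis by simp
    qed
    show "a \<in> ?h ` {1..k}"
    proof (cases "r \<in> {1..k}")
      case True thus ?thesis using ra by (intro image_eqI[of _ _ r]) auto
    next
      case False hence "p - r \<in> {1..k}" using disj by blast
      thus ?thesis using ra pr by (intro image_eqI[of _ _ "p - r"]) auto
    qed
  qed
  have "card {a \<in> {1..p-1}. QuadRes p a} \<le> card (?h ` {1..k})"
    by (rule card_mono[OF _ sub]) simp
  also have "\<dots> \<le> card {1..k}" by (rule card_image_le) simp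
  also have "\<dots> < card {1..p-1}" using k assms by simp
  finally have lt: "card {a \<in> {1..p-1}. QuadRes p a} < card {1..p-1}" .
  have "{a \<in> {1..p-1}. QuadRes p a} \<noteq> {1..p-1}" using lt by (metis less_irrefl)
  then obtain g where g: "g \<in> {1..p-1}" "\<not> QuadRes p g" by blast
  have "\<not> p dvd g"
  proof
    assume "p dvd g" hence "p \<le> g" using zdvd_imp_le g by auto
    thus False using g by auto
  qed
  thus ?thesis using g by (auto simp: Legendre_def cong_0_iff)
qed



lemma prime_coprime_iff_int:
  assumes "prime (q::int)" shows "coprime c q \<longleftrightarrow> \<not> q dvd c"
  using assms by (metis coprime_commute prime_imp_coprime coprime_absorb_left not_prime_unit)

lemma card_ge2_obtain:
  assumes "card J \<ge> 2"
  obtains j1 j2 where "j1 \<in> J" "j2 \<in> J" "j1 \<noteq> j2"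
proof -
  have fin: "finite J" using assms by (metis card.infinite not_numeral_le_zero)
  have "J \<noteq> {}" using assms by auto
  then obtain j1 where j1: "j1 \<in> J" by blast
  have "card (J - {j1}) \<ge> 1" using assms j1 fin by simp
  hence "J - {j1} \<noteq> {}" by (metis card.empty not_one_le_zero)
  then obtain j2 where "j2 \<in> J - {j1}" by blast
  thus ?thesis using that j1 by blast
qed

lemma prime_step:
  fixes p :: nat and x :: "nat \<Rightarrow> int"
  assumes pp: "prime p" and p2: "p > 2"
    and card: "card {i. i < L \<and> coprime (x i) (int p)} \<ge> 2"
  shows "\<exists>c. (\<forall>i. coprime (c i) (int p)) \<and> [c u = 1] (mod int p)
              \<and> [(\<Sum>i<L. c i * x i) = 0] (mod int p)"
proof -
  define P where "P = int p"
  have P: "prime P" "P > 2" using pp p2 unfolding P_def by auto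
  obtain j1 j2 where j: "j1 \<in> {i. i < L \<and> coprime (x i) (int p)}"
      "j2 \<in> {i. i < L \<and> coprime (x i) (int p)}" "j1 \<noteq> j2"
    using card_ge2_obtain[OF card] by blast
  have x1: "\<not> P dvd x j1" and x2: "\<not> P dvd x j2" and L: "j1 < L" "j2 < L"
    using j prime_coprime_iff_int[OF P(1)] unfolding P_def by auto
  define s where "s = (\<Sum>i\<in>{..<L} - {j1} - {j2}. x i)"
  have "\<exists>k\<in>{1,2}. \<not> P dvd (k * x j1 + s)"
  proof (rule ccontr)
    assume "\<not> ?thesis"
    hence "P dvd (1 * x j1 + s)" "P dvd (2 * x j1 + s)" by auto
    hence "P dvd ((2 * x j1 + s) - (1 * x j1 + s))" using dvd_diff by blast
    thus False using x1 by simp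
  qed
  then obtain k where k: "k \<in> {1,2}" "\<not> P dvd (k * x j1 + s)" by blast
  have kc: "\<not> P dvd k"
  proof
    assume "P dvd k" hence "P \<le> k" using k(1) zdvd_imp_le by auto
    thus False using k(1) P(2) by auto
  qed
  have "coprime (x j2) P" using x2 prime_coprime_iff_int[OF P(1)] by simp
  then obtain w where w: "[x j2 * w = 1] (mod P)" using cong_solve_coprime_int by blast
  have wc: "\<not> P dvd w"
  proof
    assume "P dvd w" hence "P dvd x j2 * w" by simp
    hence "P dvd 1" using w by (metis cong_dvd_iff)
    thus False using P(1) by (metis not_prime_unit)
  qed
  define c0 where "c0 i = (if i = j1 then k else if i = j2 then -(k * x j1 + s) * w else 1)" for i
  have c0c: "\<not> P dvd c0 i" for i
    using kc wc k(2) P(1) dvd_minus_iff[of P "k * x j1 + s"] unfolding c0_def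
    by (auto simp: prime_dvd_mult_iff not_prime_unit)
  have "(\<Sum>i<L. c0 i * x i) = c0 j1 * x j1 + (\<Sum>i\<in>{..<L} - {j1}. c0 i * x i)"
    using L by (subst sum.remove[of _ j1]) auto
  also have "(\<Sum>i\<in>{..<L} - {j1}. c0 i * x i) = c0 j2 * x j2 + (\<Sum>i\<in>{..<L} - {j1} - {j2}. c0 i * x i)"
    using L j(3) by (subst sum.remove[of _ j2]) auto
  also have "(\<Sum>i\<in>{..<L} - {j1} - {j2}. c0 i * x i) = s"
    unfolding s_def by (rule sum.cong) (auto simp: c0_def)
  finally have sumeq: "(\<Sum>i<L. c0 i * x i) = k * x j1 - (k * x j1 + s) * (x j2 * w) + s"
    using j(3) by (simp add: c0_def algebra_simps)
  have "[k * x j1 - (k * x j1 + s) * (x j2 * w) + s = k * x j1 - (k * x j1 + s) * 1 + s] (mod P)"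
    by (intro cong_add cong_diff cong_mult w cong_refl)
  hence s0: "[(\<Sum>i<L. c0 i * x i) = 0] (mod P)" unfolding sumeq by simp
  have "coprime (c0 u) P" using c0c prime_coprime_iff_int[OF P(1)] by simp
  then obtain v where v: "[c0 u * v = 1] (mod P)" using cong_solve_coprime_int by blast
  have vc: "\<not> P dvd v"
  proof
    assume "P dvd v" hence "P dvd c0 u * v" by simp
    hence "P dvd 1" using v by (metis cong_dvd_iff)
    thus False using P(1) by (metis not_prime_unit)
  qed
  define c where "c i = c0 i * v" for i
  have "(\<Sum>i<L. c i * x i) = v * (\<Sum>i<L. c0 i * x i)"
    unfolding c_def by (simp add: sum_distrib_left algebra_simps)
  moreover have "[v * (\<Sum>i<L. c0 i * x i) = v * 0] (mod P)" using s0 by (intro cong_mult cong_refl)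
  ultimately have "[(\<Sum>i<L. c i * x i) = 0] (mod P)" by simp
  moreover have "\<forall>i. coprime (c i) P" unfolding c_def
    using c0c vc prime_coprime_iff_int[OF P(1)] P(1) by (auto simp: prime_dvd_mult_iff)
  moreover have "[c u = 1] (mod P)" unfolding c_def using v .
  ultimately show ?thesis unfolding P_def by blast
qed



lemma main_lemma:
  fixes n :: nat and x :: "nat \<Rightarrow> int"
  assumes "odd n" "squarefree n"
    and "\<And>p. prime p \<Longrightarrow> p dvd n \<Longrightarrow> card {i. i < L \<and> coprime (x i) (int p)} \<ge> 2"
    and "\<And>i. \<epsilon> i = 1 \<or> \<epsilon> i = -1"
  shows "\<exists>a. (\<forall>i. coprime (a i) (int n)) \<and> [a u = 1] (mod int n)
     \<and> (\<forall>i<L. i \<noteq> u \<longrightarrow> \<not> coprime (x i) (int n) \<longrightarrow> jacobi_sym (a i) n = \<epsilon> i)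
     \<and> [(\<Sum>i<L. a i * x i) = 0] (mod int n)"
  using assms
proof (induction n arbitrary: \<epsilon> rule: less_induct)
  case (less n)
  show ?case
  proof (cases "n = 1")
    case True
    show ?thesis by (rule exI[of _ "\<lambda>_. 1"]) (simp add: True)
  next
    case False
    have n0: "n > 0" using less.prems(1) by (cases n) auto
    obtain p where p: "prime p" "p dvd n" using prime_factor_nat False by blast
    define m where "m = n div p"
    have nm: "n = p * m" using p m_def by simp
    have pm: "\<not> p dvd m"
    proof
      assume "p dvd m"
      hence "p^2 dvd n" unfolding nm power2_eq_square by simp
      hence "p dvd 1" using squarefreeD[OF less.prems(2)] by blast
      thus False using p(1) by simp
    qed
    have m0: "m > 0" using n0 nm by auto
    have mlt: "m < n" using nm prime_gt_1_nat[OF p(1)] m0 by simp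
    have modd: "odd m" using less.prems(1) nm by simp
    have msq: "squarefree m" using squarefree_multD(2) less.prems(2) nm by metis
    have p2: "p > 2"
    proof -
      have "p \<noteq> 2" using p(2) less.prems(1) by auto
      thus ?thesis using prime_ge_2_nat[OF p(1)] by linarith
    qed
    have Pp: "prime (int p)" using p(1) by (simp only: prime_nat_int_transfer)
    have cop_mp: "coprime (int m) (int p)"
      using pm p(1) by (metis coprime_commute prime_imp_coprime coprime_int_iff)
    obtain c0 where c0: "\<forall>i. coprime (c0 i) (int p)" "[c0 u = 1] (mod int p)"
        "[(\<Sum>i<L. c0 i * x i) = 0] (mod int p)"
      using prime_step[OF p(1) p2 less.prems(3)[OF p]] by blast
    define \<epsilon>' where "\<epsilon>' i = \<epsilon> i * Legendre (c0 i) (int p)" for i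
    have Lc0: "Legendre (c0 i) (int p) = 1 \<or> Legendre (c0 i) (int p) = -1" for i
      using c0(1) Legendre_pm1 prime_coprime_iff_int[OF Pp] by blast
    have \<epsilon>'pm: "\<epsilon>' i = 1 \<or> \<epsilon>' i = -1" for i
      unfolding \<epsilon>'_def using Lc0[of i] less.prems(4)[of i] by auto
    have hypm: "card {i. i < L \<and> coprime (x i) (int q)} \<ge> 2" if "prime q" "q dvd m" for q
    proof -
      have "q dvd n" using that(2) nm by simp
      thus ?thesis using less.prems(3)[OF that(1)] by blast
    qed
    have exb: "\<exists>b. (\<forall>i. coprime (b i) (int m)) \<and> [b u = 1] (mod int m) \<and>
        (\<forall>i<L. i \<noteq> u \<longrightarrow> \<not> coprime (x i) (int m) \<longrightarrow> jacobi_sym (b i) m = \<epsilon>' i) \<and>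
        [(\<Sum>i<L. b i * x i) = 0] (mod int m)"
      by (rule less.IH[OF mlt modd msq hypm \<epsilon>'pm])
    then obtain b where bb: "(\<forall>i. coprime (b i) (int m)) \<and> [b u = 1] (mod int m) \<and>
        (\<forall>i<L. i \<noteq> u \<longrightarrow> \<not> coprime (x i) (int m) \<longrightarrow> jacobi_sym (b i) m = \<epsilon>' i) \<and>
        [(\<Sum>i<L. b i * x i) = 0] (mod int m)" by (rule exE)
    note b = conjunct1[OF bb] conjunct1[OF conjunct2[OF bb]]
      conjunct1[OF conjunct2[OF conjunct2[OF bb]]] conjunct2[OF conjunct2[OF conjunct2[OF bb]]]
    obtain g where g: "\<not> int p dvd g" "Legendre g (int p) = -1"
      using exists_nonres[OF Pp] p2 by auto
    define c where "c i = (if i \<noteq> u \<and> int p dvd x i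
        then (if \<epsilon> i * jacobi_sym (b i) m = 1 then 1 else g) else c0 i)" for i
    have cc: "coprime (c i) (int p)" for i
      unfolding c_def using c0(1) g(1) prime_coprime_iff_int[OF Pp] by auto
    have "[(\<Sum>i<L. c i * x i) = (\<Sum>i<L. c0 i * x i)] (mod int p)"
    proof (rule cong_sum)
      fix i
      show "[c i * x i = c0 i * x i] (mod int p)"
      proof (cases "i \<noteq> u \<and> int p dvd x i")
        case True
        hence "[c i * x i = 0] (mod int p)" "[c0 i * x i = 0] (mod int p)"
          by (auto simp: cong_0_iff)
        thus ?thesis using cong_trans cong_sym by metis
      next
        case False thus ?thesis unfolding c_def by auto
      qed
    qed
    hence csum: "[(\<Sum>i<L. c i * x i) = 0] (mod int p)" using c0(3) by (rule cong_trans)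
    have cu: "[c u = 1] (mod int p)" using c0(2) unfolding c_def by simp
    have "\<forall>i. \<exists>a. [a = b i] (mod int m) \<and> [a = c i] (mod int p)"
      using binary_chinese_remainder_int[OF cop_mp] by blast
    then obtain a where a: "\<And>i. [a i = b i] (mod int m)" "\<And>i. [a i = c i] (mod int p)"
      by metis
    have nmi: "int n = int m * int p" using nm by simp
    have P1: "\<forall>i. coprime (a i) (int n)"
    proof
      fix i
      have "coprime (a i) (int m)" using cong_imp_coprime[OF cong_sym[OF a(1)]] b(1) by blast
      moreover have "coprime (a i) (int p)" using cong_imp_coprime[OF cong_sym[OF a(2)]] cc by blast
      ultimately show "coprime (a i) (int n)" unfolding nmi by simp
    qed
    have P2: "[a u = 1] (mod int n)" unfolding nmi
      using coprime_cong_mult[OF cong_trans[OF a(1) b(2)] cong_trans[OF a(2) cu] cop_mp] .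
    have "[(\<Sum>i<L. a i * x i) = (\<Sum>i<L. b i * x i)] (mod int m)"
      by (rule cong_sum) (intro cong_mult a(1) cong_refl)
    hence sm: "[(\<Sum>i<L. a i * x i) = 0] (mod int m)" using b(4) by (rule cong_trans)
    have "[(\<Sum>i<L. a i * x i) = (\<Sum>i<L. c i * x i)] (mod int p)"
      by (rule cong_sum) (intro cong_mult a(2) cong_refl)
    hence sp: "[(\<Sum>i<L. a i * x i) = 0] (mod int p)" using csum by (rule cong_trans)
    have P4: "[(\<Sum>i<L. a i * x i) = 0] (mod int n)" unfolding nmi
      by (rule coprime_cong_mult[OF sm sp cop_mp])
    have P3: "jacobi_sym (a i) n = \<epsilon> i"
      if i: "i < L" "i \<noteq> u" "\<not> coprime (x i) (int n)" for i
    proof -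
      have "jacobi_sym (a i) n = Legendre (a i) (int p) * jacobi_sym (a i) m"
        unfolding nm by (rule jacobi_mult_prime[OF p(1) pm m0])
      also have "\<dots> = Legendre (c i) (int p) * jacobi_sym (b i) m"
        using Legendre_cong[OF a(2)] jacobi_cong[OF a(1)] by simp
      finally have J: "jacobi_sym (a i) n = Legendre (c i) (int p) * jacobi_sym (b i) m" .
      have Jb: "jacobi_sym (b i) m = 1 \<or> jacobi_sym (b i) m = -1" using jacobi_pm1 b(1) by blast
      show ?thesis
      proof (cases "int p dvd x i")
        case True
        show ?thesis
        proof (cases "\<epsilon> i * jacobi_sym (b i) m = 1")
          case True2: True
          hence "c i = 1" unfolding c_def using True i by simp
          hence "jacobi_sym (a i) n = jacobi_sym (b i) m" using J Legendre_one[OF Pp] by simp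
          thus ?thesis using True2 Jb less.prems(4)[of i] by auto
        next
          case False2: False
          hence "c i = g" unfolding c_def using True i by simp
          hence "jacobi_sym (a i) n = - jacobi_sym (b i) m" using J g(2) by simp
          thus ?thesis using False2 Jb less.prems(4)[of i] by auto
        qed
      next
        case False
        hence ci: "c i = c0 i" unfolding c_def by simp
        have "coprime (x i) (int p)" using False prime_coprime_iff_int[OF Pp] by simp
        hence "\<not> coprime (x i) (int m)" using i(3) unfolding nmi by simp
        hence "jacobi_sym (b i) m = \<epsilon>' i" using b(3) i by blast
        hence "jacobi_sym (a i) n = \<epsilon> i * (Legendre (c0 i) (int p))^2"
          using J ci unfolding \<epsilon>'_def by (simp add: power2_eq_square algebra_simps)
        thus ?thesis using Lc0[of i] by auto
      qed
    qed
    show ?thesis using P1 P2 P3 P4 by blast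
  qed
qed



theorem lemma2p10:
  fixes n :: nat and xs :: "int list"
  assumes "odd n" and "squarefree n"
    and "set xs \<subseteq> {0..<int n}"
    and "\<And>p. prime p \<Longrightarrow> p dvd n \<Longrightarrow>
           card {i. i < length xs \<and> coprime (xs ! i) (int p)} \<ge> 2"
    and "card {i. i < length xs \<and> coprime (xs ! i) (int n)} \<le> 1"
  shows "weighted_zero_sum n (S_set n) xs"
proof -
  define L where "L = length xs"
  define x where "x i = xs ! i" for i
  have n0: "n > 0" using assms(1) by (cases n) auto
  define U where "U = {i. i < L \<and> coprime (x i) (int n)}"
  have cardU: "card U \<le> 1" using assms(5) unfolding U_def L_def x_def .
  have finU: "finite U" unfolding U_def by simp
  define u where "u = (if U = {} then L else (SOME i. i \<in> U))"
  have nonu: "\<not> coprime (x i) (int n)" if i: "i < L" "i \<noteq> u" for i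
  proof
    assume c: "coprime (x i) (int n)"
    hence iU: "i \<in> U" unfolding U_def using i by simp
    hence "U \<noteq> {}" by blast
    hence uU: "u \<in> U" unfolding u_def using iU by (simp add: some_in_eq)
    have "card {i, u} \<le> card U" using iU uU finU by (intro card_mono) auto
    thus False using i(2) cardU by simp
  qed
  have hyp: "card {i. i < L \<and> coprime (x i) (int p)} \<ge> 2" if "prime p" "p dvd n" for p
    using assms(4)[OF that] unfolding L_def x_def .
  have eps: "\<And>i. (\<lambda>_. 1::int) i = 1 \<or> (\<lambda>_. 1::int) i = -1" by simp
  have exa: "\<exists>a. (\<forall>i. coprime (a i) (int n)) \<and> [a u = 1] (mod int n)
     \<and> (\<forall>i<L. i \<noteq> u \<longrightarrow> \<not> coprime (x i) (int n) \<longrightarrow> jacobi_sym (a i) n = (\<lambda>_. 1::int) i)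
     \<and> [(\<Sum>i<L. a i * x i) = 0] (mod int n)"
    by (rule main_lemma[OF assms(1,2) hyp eps])
  then obtain a where aa: "(\<forall>i. coprime (a i) (int n)) \<and> [a u = 1] (mod int n)
     \<and> (\<forall>i<L. i \<noteq> u \<longrightarrow> \<not> coprime (x i) (int n) \<longrightarrow> jacobi_sym (a i) n = (\<lambda>_. 1::int) i)
     \<and> [(\<Sum>i<L. a i * x i) = 0] (mod int n)" by (rule exE)
  note a = conjunct1[OF aa] conjunct1[OF conjunct2[OF aa]]
      conjunct1[OF conjunct2[OF conjunct2[OF aa]]] conjunct2[OF conjunct2[OF conjunct2[OF aa]]]
  define as where "as = map (\<lambda>i. a i mod int n) [0..<L]"
  have asi: "as ! i = a i mod int n" if "i < L" for i
    unfolding as_def using that by simp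
  have modc: "[a i mod int n = a i] (mod int n)" for i by (simp add: cong_def)
  have inS: "a i mod int n \<in> S_set n" if "i < L" for i
  proof -
    have "coprime (a i mod int n) (int n)"
      using cong_imp_coprime[OF cong_sym[OF modc]] a(1) by blast
    moreover have "jacobi_sym (a i mod int n) n = 1"
    proof -
      have "jacobi_sym (a i mod int n) n = jacobi_sym (a i) n" by (rule jacobi_cong[OF modc])
      also have "\<dots> = 1"
      proof (cases "i = u")
        case True
        thus ?thesis using jacobi_cong[OF a(2)] jacobi_one by simp
      next
        case False
        thus ?thesis using a(3) nonu[OF that False] that by simp
      qed
      finally show ?thesis .
    qed
    moreover have "a i mod int n \<in> {0..<int n}" using n0 by simp
    ultimately show ?thesis unfolding S_set_def by simp
  qed
  show ?thesis unfolding weighted_zero_sum_def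
  proof (intro exI[of _ as] conjI)
    show "length as = length xs" unfolding as_def L_def by simp
    show "set as \<subseteq> S_set n" unfolding as_def using inS by auto
    have "(\<Sum>i<length xs. as ! i * xs ! i) = (\<Sum>i<L. (a i mod int n) * x i)"
      unfolding L_def x_def by (rule sum.cong) (auto simp: asi L_def)
    also have "[\<dots> = (\<Sum>i<L. a i * x i)] (mod int n)"
      by (rule cong_sum) (intro cong_mult modc cong_refl)
    finally show "[(\<Sum>i<length xs. as ! i * xs ! i) = 0] (mod int n)"
      using a(4) by (rule cong_trans)
  qed
qed

end
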